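(* Let $K$ and $L$ be regular languages over an alphabet $\Sigma$. If for every $r\ge 1$ there is a tower of prefixes of height at least $r$ between $K$ and $L$, then there is an infinite tower of prefixes between $K$ and $L$.
   Context: A string $v$ is a prefix of $w$, written $v\le w$, if $w=vu$ for some string $u$. A sequence $(w_i)_{i=1}^r$ of strings is a tower of prefixes between languages $K$ and $L$ if $w_1\in K\cup L$ and for all $i=1,\dots,r-1$: $w_i\le w_{i+1}$, $w_i\in K$ implies $w_{i+1}\in L$, and $w_i\in L$ implies $w_{i+1}\in K$; $r$ is its height. An infinite tower of prefixes is an infinite sequence $(w_i)_{i\ge1}$ with the same properties. *)

theory Defs
  imports Main "HOL-Library.Sublist"
begin

definition regular_lang :: "'a set \<Rightarrow> 'a list set \<Rightarrow> bool" where
  "regular_lang \<Sigma> L \<longleftrightarrow> L \<subseteq> lists \<Sigma> \<and>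
     (\<exists>(Q::nat set) q0 \<delta> F. finite Q \<and> q0 \<in> Q \<and> (\<forall>q\<in>Q. \<forall>a\<in>\<Sigma>. \<delta> q a \<in> Q) \<and> F \<subseteq> Q \<and>
        L = {w \<in> lists \<Sigma>. fold (\<lambda>a q. \<delta> q a) w q0 \<in> F})"

text \<open>A (finite) tower of prefixes between K and L, given as the list [w_1,...,w_r]; its height is its length.\<close>
definition tower :: "'a list set \<Rightarrow> 'a list set \<Rightarrow> 'a list list \<Rightarrow> bool" where
  "tower K L ws \<longleftrightarrow> ws \<noteq> [] \<and> hd ws \<in> K \<union> L \<and>
     (\<forall>i. Suc i < length ws \<longrightarrow> prefix (ws ! i) (ws ! Suc i) \<and>
        (ws ! i \<in> K \<longrightarrow> ws ! Suc i \<in> L) \<and> (ws ! i \<in> L \<longrightarrow> ws ! Suc i \<in> K))"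

definition inf_tower :: "'a list set \<Rightarrow> 'a list set \<Rightarrow> (nat \<Rightarrow> 'a list) \<Rightarrow> bool" where
  "inf_tower K L w \<longleftrightarrow> w 0 \<in> K \<union> L \<and>
     (\<forall>i. prefix (w i) (w (Suc i)) \<and>
        (w i \<in> K \<longrightarrow> w (Suc i) \<in> L) \<and> (w i \<in> L \<longrightarrow> w (Suc i) \<in> K))"

end

theory Submission
  imports Defs
begin

lemma fold_rep_fix: "fold f u s = s \<Longrightarrow> fold f (concat (replicate q u)) s = s"
  by (induction q) auto

lemma fold_in_Q: "(\<forall>q\<in>Q. \<forall>a\<in>\<Sigma>. \<delta> q a \<in> Q) \<Longrightarrow> w \<in> lists \<Sigma> \<Longrightarrow> q \<in> Q
   \<Longrightarrow> fold (\<lambda>a q. \<delta> q a) w q \<in> Q"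
  by (induction w arbitrary: q) auto

lemma tower_chain:
  assumes "tower K L ws" "a \<le> b" "b < length ws"
  shows "prefix (ws!a) (ws!b)"
  using assms(2,3)
proof (induction b)
  case 0 then show ?case by simp
next
  case (Suc b)
  show ?case
  proof (cases "a = Suc b")
    case True then show ?thesis by simp
  next
    case False
    then have "prefix (ws!a) (ws!b)" using Suc by simp
    moreover have "prefix (ws!b) (ws!Suc b)" using assms(1) Suc.prems unfolding tower_def by blast
    ultimately show ?thesis using prefix_order.trans by blast
  qed
qed

lemma tower_mem:
  assumes "tower K L ws" "k < length ws"
  shows "ws!k \<in> K \<union> L"
  using assms(2)
proof (induction k)
  case 0 then show ?case using assms(1) unfolding tower_def by (metis hd_conv_nth)
next
  case (Suc k)
  then have "ws!k \<in> K \<union> L" by simp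
  then show ?case using assms(1) Suc.prems unfolding tower_def by blast
qed

theorem lemma13:
  fixes \<Sigma> :: "'a set" and K L :: "'a list set"
  assumes "finite \<Sigma>"
    and "regular_lang \<Sigma> K" and "regular_lang \<Sigma> L"
    and "\<forall>r\<ge>1. \<exists>ws. tower K L ws \<and> length ws \<ge> r"
  shows "\<exists>w. inf_tower K L w"
proof -
  obtain QK :: "nat set" and q0K \<delta>K FK where KL: "K \<subseteq> lists \<Sigma>" and fQK: "finite QK"
    and q0K: "q0K \<in> QK" and dK: "\<forall>q\<in>QK. \<forall>a\<in>\<Sigma>. \<delta>K q a \<in> QK"
    and Kdef: "K = {w \<in> lists \<Sigma>. fold (\<lambda>a q. \<delta>K q a) w q0K \<in> FK}"
    using assms(2) unfolding regular_lang_def by blast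
  obtain QL :: "nat set" and q0L \<delta>L FL where LL: "L \<subseteq> lists \<Sigma>" and fQL: "finite QL"
    and q0L: "q0L \<in> QL" and dL: "\<forall>q\<in>QL. \<forall>a\<in>\<Sigma>. \<delta>L q a \<in> QL"
    and Ldef: "L = {w \<in> lists \<Sigma>. fold (\<lambda>a q. \<delta>L q a) w q0L \<in> FL}"
    using assms(3) unfolding regular_lang_def by blast
  define st where "st w = (fold (\<lambda>a q. \<delta>K q a) w q0K, fold (\<lambda>a q. \<delta>L q a) w q0L)" for w
  have st_Q: "st w \<in> QK \<times> QL" if "w \<in> lists \<Sigma>" for w
    unfolding st_def using fold_in_Q[OF dK that q0K] fold_in_Q[OF dL that q0L] by simp
  have E: "(w \<in> K \<longleftrightarrow> w' \<in> K) \<and> (w \<in> L \<longleftrightarrow> w' \<in> L)"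
    if "w \<in> lists \<Sigma>" "w' \<in> lists \<Sigma>" "st w = st w'" for w w'
    using that unfolding Kdef Ldef st_def by auto
  have st_app: "st (a @ b) = (fold (\<lambda>a q. \<delta>K q a) b (fst (st a)), fold (\<lambda>a q. \<delta>L q a) b (snd (st a)))"
    for a b unfolding st_def by simp
  define N where "N = card (QK \<times> QL)"
  obtain ws where tw: "tower K L ws" and len: "length ws \<ge> N + 1"
    using assms(4) by (meson le_add2)
  have wsL: "ws!k \<in> lists \<Sigma>" if "k < length ws" for k
    using tower_mem[OF tw that] KL LL by blast
  have "\<not> inj_on (\<lambda>k. st (ws!k)) {..<length ws}"
  proof
    assume inj: "inj_on (\<lambda>k. st (ws!k)) {..<length ws}"
    have "(\<lambda>k. st (ws!k)) ` {..<length ws} \<subseteq> QK \<times> QL" using st_Q wsL by blast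
    then have "card ((\<lambda>k. st (ws!k)) ` {..<length ws}) \<le> N"
      unfolding N_def using fQK fQL by (metis card_mono finite_SigmaI)
    then show False using card_image[OF inj] len by simp
  qed
  then obtain a b where ab: "a < length ws" "b < length ws" "a \<noteq> b" "st (ws!a) = st (ws!b)"
    unfolding inj_on_def by auto
  define i where "i = min a b"
  define j where "j = max a b"
  have ij: "i < j" "j < length ws" "st (ws!i) = st (ws!j)"
    using ab unfolding i_def j_def by (auto simp: min_def max_def)
  define p where "p = j - i"
  have p0: "p > 0" using ij p_def by simp
  define x where "x r = drop (length (ws!i)) (ws!(i+r))" for r
  define u where "u = x p"
  have wx: "ws!(i+r) = ws!i @ x r" if "r \<le> p" for r
  proof -
    have "prefix (ws!i) (ws!(i+r))" using tower_chain[OF tw, of i "i+r"] that ij p_def by simp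
    then show ?thesis unfolding x_def prefix_def by auto
  qed
  have xL: "x r \<in> lists \<Sigma>" if "r \<le> p" for r
  proof -
    have "i + r < length ws" using that ij p_def by simp
    then have "ws!(i+r) \<in> lists \<Sigma>" by (rule wsL)
    then show ?thesis unfolding x_def by (auto dest!: in_set_dropD)
  qed
  have uL: "u \<in> lists \<Sigma>" using xL[of p] u_def by simp
  have ufixK: "fold (\<lambda>a q. \<delta>K q a) u (fst (st (ws!i))) = fst (st (ws!i))"
    and ufixL: "fold (\<lambda>a q. \<delta>L q a) u (snd (st (ws!i))) = snd (st (ws!i))"
    using ij(3) wx[of p] st_app[of "ws!i" u] p_def ij unfolding u_def by (auto simp: prod_eq_iff)
  define W where "W q r = ws!i @ concat (replicate q u) @ x r" for q r
  have WL: "W q r \<in> lists \<Sigma>" if "r \<le> p" for q r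
    unfolding W_def using wsL[of i] ij xL[OF that] uL by auto
  have Wst: "st (W q r) = st (ws!(i+r))" if "r \<le> p" for q r
  proof -
    have "st (W q r) = st (ws!i @ x r)"
      unfolding W_def st_app using fold_rep_fix[OF ufixK] fold_rep_fix[OF ufixL] by simp
    then show ?thesis using wx[OF that] by simp
  qed
  have WE: "(W q r \<in> K \<longleftrightarrow> ws!(i+r) \<in> K) \<and> (W q r \<in> L \<longleftrightarrow> ws!(i+r) \<in> L)" if "r \<le> p" for q r
    using E[OF WL[OF that] wsL Wst[OF that]] that ij p_def by simp
  have Wpre: "prefix (W q r) (W q (Suc r))" if "r < p" for q r
  proof -
    have "prefix (ws!(i+r)) (ws!(i+Suc r))" using tower_chain[OF tw, of "i+r" "i+Suc r"] that ij p_def by simp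
    then have "prefix (x r) (x (Suc r))" using wx[of r] wx[of "Suc r"] that by simp
    then show ?thesis unfolding W_def by simp
  qed
  define V where "V m = W (m div p) (m mod p)" for m
  have VS: "V (Suc m) = W (m div p) (Suc (m mod p))" for m
  proof (cases "Suc (m mod p) = p")
    case True
    have "x 0 = []" unfolding x_def by simp
    then have "V (Suc m) = ws!i @ concat (replicate (Suc (m div p)) u)"
      unfolding V_def W_def using True by (simp add: div_Suc mod_Suc)
    also have "\<dots> = ws!i @ concat (replicate (m div p)  u) @ u"
      by (metis append_assoc concat.simps(2) concat_append concat.simps(1) append_Nil2 replicate_Suc replicate_append_same)
    finally show ?thesis unfolding W_def u_def using True by simp
  next
    case False
    then show ?thesis unfolding V_def by (simp add: div_Suc mod_Suc)
  qed
  have V0: "V 0 = ws!i" unfolding V_def W_def x_def by simp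
  have Vstep: "prefix (V m) (V (Suc m)) \<and> (V m \<in> K \<longrightarrow> V (Suc m) \<in> L) \<and> (V m \<in> L \<longrightarrow> V (Suc m) \<in> K)" for m
  proof -
    define r where "r = m mod p"
    have r: "r < p" using p0 r_def by simp
    have 1: "V m = W (m div p) r" "V (Suc m) = W (m div p) (Suc r)" using VS V_def r_def by auto
    have idx: "Suc (i + r) < length ws" using r ij p_def by simp
    have tstep: "(ws!(i+r) \<in> K \<longrightarrow> ws!(i+Suc r) \<in> L) \<and> (ws!(i+r) \<in> L \<longrightarrow> ws!(i+Suc r) \<in> K)"
      using tw idx unfolding tower_def by auto
    show ?thesis unfolding 1 using Wpre[OF r] WE[of r] WE[of "Suc r"] r tstep by auto
  qed
  define v where "v k = (if k < i then ws!k else V (k - i))" for k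
  have "inf_tower K L v"
    unfolding inf_tower_def
  proof (intro conjI allI)
    show "v 0 \<in> K \<union> L"
    proof -
      have "0 < length ws" using ij by linarith
      then show ?thesis using tower_mem[OF tw, of 0] V0 unfolding v_def by auto
    qed
  next
    fix k
    have "prefix (v k) (v (Suc k)) \<and> (v k \<in> K \<longrightarrow> v (Suc k) \<in> L) \<and> (v k \<in> L \<longrightarrow> v (Suc k) \<in> K)"
    proof (cases "Suc k \<le> i")
      case True
      have "v k = ws!k" "v (Suc k) = ws!(Suc k)" using True V0 unfolding v_def by auto
      then show ?thesis using tw True ij unfolding tower_def by auto
    next
      case False
      then have "v k = V (k - i)" "v (Suc k) = V (Suc (k - i))" unfolding v_def by (auto simp: Suc_diff_le)
      then show ?thesis using Vstep by simp
    qed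
    then show "prefix (v k) (v (Suc k))" "v k \<in> K \<longrightarrow> v (Suc k) \<in> L" "v k \<in> L \<longrightarrow> v (Suc k) \<in> K"
      by auto
  qed
  then show ?thesis by blast
qed

end
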